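(* Let $\mathcal{F}$, $B_1,\dots,B_m$ be as in the context. Let $\mathcal{G}\subseteq\mathcal{F}$ and let $\phi:\mathcal{G}\to 2^{[n]}$ satisfy $\phi(G)\subseteq G$ for all $G\in\mathcal{G}$. Suppose $\mathcal{G}=\mathcal{G}_1\sqcup\mathcal{G}_2$ where every $F_k\in\mathcal{G}_1$ satisfies $|B_k|=d$ and $\phi(F_k)=B_k$. If the restriction $\phi|_{\mathcal{G}_2}$ is injective, then $\phi$ is injective.
   Context: Let $\mathcal{F}=\{F_1,\dots,F_m\}\subseteq\binom{[n]}{d+1}$ consist of distinct sets and have VC-dimension at most $d$ (no $(d+1)$-set $S$ is shattered, i.e. no $S$ such that every $A\subseteq S$ equals $F\cap S$ for some $F\in\mathcal{F}$). For $i\in[m]$, call $B\subsetneq F_i$ admissible for $F_i$ if $F\cap F_i\neq B$ for every $F\in\mathcal{F}$ (admissible sets exist by the VC-dimension assumption). For each $i$, $B_i$ is a fixed admissible set for $F_i$ of maximum cardinality among all admissible sets for $F_i$. *)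

theory Defs
  imports Main
begin

definition shatters :: "'a set set \<Rightarrow> 'a set \<Rightarrow> bool" where
  "shatters \<F> S \<longleftrightarrow> (\<forall>A. A \<subseteq> S \<longrightarrow> (\<exists>F\<in>\<F>. F \<inter> S = A))"

definition vc_dim_le :: "'a set \<Rightarrow> 'a set set \<Rightarrow> nat \<Rightarrow> bool" where
  "vc_dim_le X \<F> d \<longleftrightarrow> (\<forall>S. S \<subseteq> X \<longrightarrow> card S = d + 1 \<longrightarrow> \<not> shatters \<F> S)"

definition admissible :: "'a set set \<Rightarrow> 'a set \<Rightarrow> 'a set \<Rightarrow> bool" where
  "admissible \<F> Fi B \<longleftrightarrow> B \<subset> Fi \<and> (\<forall>F\<in>\<F>. F \<inter> Fi \<noteq> B)"

end

theory Submission
  imports Defs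
begin

theorem claim3p1:
  fixes n d m :: nat
    and F :: "nat \<Rightarrow> nat set"
    and B :: "nat \<Rightarrow> nat set"
    and \<G> \<G>1 \<G>2 :: "nat set set"
    and \<phi> :: "nat set \<Rightarrow> nat set"
  assumes F_distinct: "inj_on F {1..m}"
    and F_sub: "\<And>i. i \<in> {1..m} \<Longrightarrow> F i \<subseteq> {1..n}"
    and F_card: "\<And>i. i \<in> {1..m} \<Longrightarrow> card (F i) = d + 1"
    and vc: "vc_dim_le {1..n} (F ` {1..m}) d"
    and B_adm: "\<And>i. i \<in> {1..m} \<Longrightarrow> admissible (F ` {1..m}) (F i) (B i)"
    and B_max: "\<And>i B'. i \<in> {1..m} \<Longrightarrow> admissible (F ` {1..m}) (F i) B' \<Longrightarrow> card B' \<le> card (B i)"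
    and G_sub: "\<G> \<subseteq> F ` {1..m}"
    and phi_sub: "\<And>G. G \<in> \<G> \<Longrightarrow> \<phi> G \<subseteq> G"
    and G_union: "\<G> = \<G>1 \<union> \<G>2"
    and G_disj: "\<G>1 \<inter> \<G>2 = {}"
    and G1_prop: "\<And>k. k \<in> {1..m} \<Longrightarrow> F k \<in> \<G>1 \<Longrightarrow> card (B k) = d \<and> \<phi> (F k) = B k"
    and inj2: "inj_on \<phi> \<G>2"
  shows "inj_on \<phi> \<G>"
proof -
  have key: "F k = F l" if k: "k \<in> {1..m}" and l: "l \<in> {1..m}" and cB: "card (B k) = d"
     and sub: "B k \<subseteq> F l" for k l
  proof -
    have adm: "B k \<subset> F k" "F l \<inter> F k \<noteq> B k" using B_adm[OF k] l unfolding admissible_def by auto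
    have fk: "finite (F k)" by (rule card_ge_0_finite) (simp add: F_card[OF k])
    have ps: "B k \<subset> F l \<inter> F k" using adm sub by auto
    have fi: "finite (F l \<inter> F k)" using fk by simp
    have "card (F l \<inter> F k) > d" using psubset_card_mono[OF fi ps] cB by simp
    moreover have "card (F l \<inter> F k) \<le> d + 1" using card_mono[OF fk, of "F l \<inter> F k"] F_card[OF k] by auto
    ultimately have "card (F l \<inter> F k) = card (F k)" using F_card[OF k] by simp
    then have "F l \<inter> F k = F k" using card_subset_eq[OF fk] by blast
    then have s1: "F k \<subseteq> F l" by blast
    have fl: "finite (F l)" by (rule card_ge_0_finite) (simp add: F_card[OF l])
    show ?thesis using card_subset_eq[OF fl s1] F_card[OF k] F_card[OF l] by simp
  qed
  show ?thesis
  proof (rule inj_onI)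
    fix G G' assume G: "G \<in> \<G>" and G': "G' \<in> \<G>" and eq: "\<phi> G = \<phi> G'"
    obtain k where k: "k \<in> {1..m}" "G = F k" using G G_sub by auto
    obtain l where l: "l \<in> {1..m}" "G' = F l" using G' G_sub by auto
    show "G = G'"
    proof (cases "G \<in> \<G>1")
      case True
      have h: "card (B k) = d \<and> \<phi> (F k) = B k" using G1_prop[OF k(1)] True k(2) by blast
      have "B k \<subseteq> F l" using eq phi_sub[OF G'] h l(2) k(2) by auto
      then show ?thesis using key[OF k(1) l(1)] h k(2) l(2) by simp
    next
      case False
      then have G2: "G \<in> \<G>2" using G G_union by auto
      show ?thesis
      proof (cases "G' \<in> \<G>1")
        case True
        have h: "card (B l) = d \<and> \<phi> (F l) = B l" using G1_prop[OF l(1)] True l(2) by blast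
        have "B l \<subseteq> F k" using eq phi_sub[OF G] h k(2) l(2) by auto
        then show ?thesis using key[OF l(1) k(1)] h k(2) l(2) by simp
      next
        case False
        then have "G' \<in> \<G>2" using G' G_union by auto
        then show ?thesis using inj2 G2 eq by (auto dest: inj_onD)
      qed
    qed
  qed
qed

end
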